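(* Let $V$ and $Q$ be complex Hilbert spaces, $A\in L(V,V^* )$, $B\in L(V,Q^* )$, with associated sesquilinear forms $a(u,v)=\langle Au,v\rangle$ and $b(v,q)=\langle Bv,q\rangle$. Assume $\|a\|<\infty$ and $\alpha>0$, where $\|a\|$ and $\alpha$ are as defined in the context. Let $V_0=\ker B$, $V_1=V_0^\perp$ and let $A_{ij}\in L(V_j,V_i^* )$, $i,j\in\{0,1\}$, be defined by $\langle A_{ij}u,v\rangle=a(u,v)$ for all $u\in V_j$, $v\in V_i$ (so $A_{00}$ is an isomorphism from $V_0$ onto $V_0^*$). Then \[ \|A_{10}A_{00}^{-1}\|_{L(V_0^*,V_1^* )}\le\sqrt{\frac{\|a\|^2}{\alpha^2}-1},\qquad \|A_{00}^{-1}A_{01}\|_{L(V_1,V_0)}\le\sqrt{\frac{\|a\|^2}{\alpha^2}-1}, \] and \[ \|A_{11}-A_{10}A_{00}^{-1}A_{01}\|_{L(V_1,V_1^* )}\le\frac{\|a\|^2}{\alpha}. \]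
   Context: For a complex Hilbert space $H$, $H^*$ denotes the space of bounded antilinear functionals on $H$, $\langle\cdot,\cdot\rangle$ the duality pairing, and $L(H_1,H_2)$ the bounded linear operators. $V_0$, $V_1$ carry the inner product of $V$, and $V_i^*$ the corresponding dual norms. Definitions: $\|a\|=\sup_{0\ne u\in V}\sup_{0\ne v\in V}\frac{|a(u,v)|}{\|u\|_V\|v\|_V}$, $\alpha=\inf_{0\ne u\in\ker B}\sup_{0\ne v\in\ker B}\frac{|a(u,v)|}{\|u\|_V\|v\|_V}=\inf_{0\ne v\in\ker B}\sup_{0\ne u\in\ker B}\frac{|a(u,v)|}{\|u\|_V\|v\|_V}$ (both infima are assumed equal and positive). *)

theory Defs
  imports "HOL-Analysis.Analysis"
begin

text \<open>HOL-Analysis only provides real inner product spaces, so we introduce complex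
inner product spaces as a type class.\<close>

class complex_inner = real_normed_vector +
  fixes scaleC :: "complex \<Rightarrow> 'a \<Rightarrow> 'a"
    and cinner :: "'a \<Rightarrow> 'a \<Rightarrow> complex"
  assumes scaleC_add_right: "scaleC c (x + y) = scaleC c x + scaleC c y"
    and scaleC_add_left: "scaleC (c + d) x = scaleC c x + scaleC d x"
    and scaleC_scaleC: "scaleC c (scaleC d x) = scaleC (c * d) x"
    and scaleC_one: "scaleC 1 x = x"
    and scaleR_scaleC: "scaleR r x = scaleC (complex_of_real r) x"
    and cinner_commute: "cinner x y = cnj (cinner y x)"
    and cinner_add_left: "cinner (x + y) z = cinner x z + cinner y z"
    and cinner_scaleC_left: "cinner (scaleC c x) y = c * cinner x y"
    and cinner_self_real: "Im (cinner x x) = 0"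
    and cinner_self_nonneg: "0 \<le> Re (cinner x x)"
    and cinner_self_eq_zero: "cinner x x = 0 \<longleftrightarrow> x = 0"
    and norm_eq_sqrt_cinner: "norm x = sqrt (Re (cinner x x))"

class chilbert_space = complex_inner + complete_space

instantiation complex :: chilbert_space
begin
definition scaleC_complex :: "complex \<Rightarrow> complex \<Rightarrow> complex" where
  "scaleC_complex c x = c * x"
definition cinner_complex :: "complex \<Rightarrow> complex \<Rightarrow> complex" where
  "cinner_complex x y = x * cnj y"
instance
  apply standard
  apply (auto simp: scaleC_complex_def cinner_complex_def algebra_simps scaleR_conv_of_real
                    complex_norm_square cmod_def power2_eq_square)
  done
end

text \<open>Closed subspaces are represented as subsets of the ambient space.  A bounded
antilinear functional on a subspace S is a function that is additive and conjugate
homogeneous on S and bounded on S (its values outside S are irrelevant).\<close>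

definition antilinear_on :: "'a::complex_inner set \<Rightarrow> ('a \<Rightarrow> complex) \<Rightarrow> bool" where
  "antilinear_on S f \<longleftrightarrow>
     (\<forall>x\<in>S. \<forall>y\<in>S. f (x + y) = f x + f y) \<and> (\<forall>x\<in>S. \<forall>c. f (scaleC c x) = cnj c * f x)"

definition bounded_on :: "'a::complex_inner set \<Rightarrow> ('a \<Rightarrow> complex) \<Rightarrow> bool" where
  "bounded_on S f \<longleftrightarrow> (\<exists>K. \<forall>x\<in>S. cmod (f x) \<le> K * norm x)"

definition dual_space :: "'a::complex_inner set \<Rightarrow> ('a \<Rightarrow> complex) set" where
  "dual_space S = {f. antilinear_on S f \<and> bounded_on S f}"

text \<open>The dual norm on \<open>S\<^sup>*\<close> (with the convention that a supremum over the empty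
set, i.e. on the zero space, is 0).\<close>
definition dual_norm :: "'a::complex_inner set \<Rightarrow> ('a \<Rightarrow> complex) \<Rightarrow> real" where
  "dual_norm S f = Sup (insert 0 {cmod (f v) / norm v | v. v \<in> S \<and> v \<noteq> 0})"

text \<open>Operators in \<open>L(H1, H2\<^sup>*)\<close> written as maps \<open>A :: H1 \<Rightarrow> H2 \<Rightarrow> complex\<close>, \<open>A u\<close>
being the functional \<open>\<langle>A u, \<cdot>\<rangle>\<close>: linear in u, each \<open>A u\<close> antilinear, and bounded.\<close>
definition bounded_op_to_dual :: "('a::complex_inner \<Rightarrow> 'b::complex_inner \<Rightarrow> complex) \<Rightarrow> bool" where
  "bounded_op_to_dual A \<longleftrightarrow>
     (\<forall>u u' v. A (u + u') v = A u v + A u' v) \<and>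
     (\<forall>c u v. A (scaleC c u) v = c * A u v) \<and>
     (\<forall>u. antilinear_on UNIV (A u)) \<and>
     (\<exists>K. \<forall>u v. cmod (A u v) \<le> K * norm u * norm v)"

definition ker_op :: "('a::complex_inner \<Rightarrow> 'b::complex_inner \<Rightarrow> complex) \<Rightarrow> 'a set" where
  "ker_op B = {v. \<forall>q. B v q = 0}"

definition orth_compl :: "'a::complex_inner set \<Rightarrow> 'a set" where
  "orth_compl S = {v. \<forall>w\<in>S. cinner v w = 0}"

definition form_quotients :: "('a::complex_inner \<Rightarrow> 'a \<Rightarrow> complex) \<Rightarrow> real set" where
  "form_quotients a = {cmod (a u v) / (norm u * norm v) | u v. u \<noteq> 0 \<and> v \<noteq> 0}"

definition form_norm :: "('a::complex_inner \<Rightarrow> 'a \<Rightarrow> complex) \<Rightarrow> real" where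
  "form_norm a = Sup (insert 0 (form_quotients a))"

definition inf_sup_left :: "('a::complex_inner \<Rightarrow> 'a \<Rightarrow> complex) \<Rightarrow> 'a set \<Rightarrow> real" where
  "inf_sup_left a K =
     Inf {Sup (insert 0 {cmod (a u v) / (norm u * norm v) | v. v \<in> K \<and> v \<noteq> 0}) | u. u \<in> K \<and> u \<noteq> 0}"

definition inf_sup_right :: "('a::complex_inner \<Rightarrow> 'a \<Rightarrow> complex) \<Rightarrow> 'a set \<Rightarrow> real" where
  "inf_sup_right a K =
     Inf {Sup (insert 0 {cmod (a u v) / (norm u * norm v) | u. u \<in> K \<and> u \<noteq> 0}) | v. v \<in> K \<and> v \<noteq> 0}"

definition A00_inv :: "('a::complex_inner \<Rightarrow> 'a \<Rightarrow> complex) \<Rightarrow> 'a set \<Rightarrow> ('a \<Rightarrow> complex) \<Rightarrow> 'a" where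
  "A00_inv a V0 f = (THE u. u \<in> V0 \<and> (\<forall>v\<in>V0. a u v = f v))"

definition opnorm_dual_dual ::
  "'a::complex_inner set \<Rightarrow> 'a set \<Rightarrow> (('a \<Rightarrow> complex) \<Rightarrow> ('a \<Rightarrow> complex)) \<Rightarrow> real" where
  "opnorm_dual_dual S T F =
     Sup (insert 0 {dual_norm T (F f) / dual_norm S f | f. f \<in> dual_space S \<and> dual_norm S f \<noteq> 0})"

definition opnorm_sp_sp :: "'a::complex_inner set \<Rightarrow> ('a \<Rightarrow> 'a) \<Rightarrow> real" where
  "opnorm_sp_sp S F = Sup (insert 0 {norm (F u) / norm u | u. u \<in> S \<and> u \<noteq> 0})"

definition opnorm_sp_dual :: "'a::complex_inner set \<Rightarrow> 'a set \<Rightarrow> ('a \<Rightarrow> ('a \<Rightarrow> complex)) \<Rightarrow> real" where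
  "opnorm_sp_dual S T F = Sup (insert 0 {dual_norm T (F u) / norm u | u. u \<in> S \<and> u \<noteq> 0})"

end

theory Submission
  imports Defs
begin

lemma sC0r: "scaleC c (0::'a::complex_inner) = 0"
  using scaleC_add_right[of c "0::'a" 0] by simp
lemma sC0l: "scaleC 0 (x::'a::complex_inner) = 0"
  using scaleR_scaleC[of 0 x] by simp
lemma sCminus_r: "scaleC c (-x::'a::complex_inner) = - scaleC c x"
  using scaleC_add_right[of c x "-x"] by (simp add: sC0r add_eq_0_iff)
lemma sCdiff_r: "scaleC c (x - y::'a::complex_inner) = scaleC c x - scaleC c y"
  using scaleC_add_right[of c x "-y"] by (simp add: sCminus_r)
lemma sCminus_l: "scaleC (-c) (x::'a::complex_inner) = - scaleC c x"
  using scaleC_add_left[of c "-c" x] by (simp add: sC0l add_eq_0_iff)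
lemma sCm1: "scaleC (-1) (x::'a::complex_inner) = -x"
  using sCminus_l[of 1 x] by (simp add: scaleC_one)
lemma mcnj: "z * cnj z = (complex_of_real (cmod z))^2"
  using complex_norm_square[of z] by simp
lemma mcnj': "cnj z * z = (complex_of_real (cmod z))^2"
  using complex_norm_square[of z] by (simp add: mult.commute)
lemma ci_add_r: "cinner (x::'a::complex_inner) (y+z) = cinner x y + cinner x z"
  by (metis cinner_add_left cinner_commute complex_cnj_add)
lemma ci_sC_r: "cinner (x::'a::complex_inner) (scaleC c y) = cnj c * cinner x y"
  by (metis cinner_scaleC_left cinner_commute complex_cnj_mult)
lemma ci0l: "cinner (0::'a::complex_inner) y = 0"
  using cinner_add_left[of "0::'a" 0 y] by simp
lemma ci0r: "cinner (x::'a::complex_inner) 0 = 0"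
  using ci_add_r[of x 0 0] by simp
lemma ci_minus_l: "cinner (-x::'a::complex_inner) y = - cinner x y"
  using cinner_add_left[of x "-x" y] by (simp add: ci0l add_eq_0_iff)
lemma ci_minus_r: "cinner (x::'a::complex_inner) (-y) = - cinner x y"
  using ci_add_r[of x y "-y"] by (simp add: ci0r add_eq_0_iff)
lemma ci_diff_l: "cinner (x - z::'a::complex_inner) y = cinner x y - cinner z y"
  using cinner_add_left[of x "-z" y] by (simp add: ci_minus_l)
lemma ci_diff_r: "cinner (x::'a::complex_inner) (y - z) = cinner x y - cinner x z"
  using ci_add_r[of x y "-z"] by (simp add: ci_minus_r)
lemma ci_self: "cinner (x::'a::complex_inner) x = complex_of_real ((norm x)^2)"
  by (simp add: complex_eq_iff cinner_self_real norm_eq_sqrt_cinner cinner_self_nonneg)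
lemma ci_self_Re: "Re (cinner (x::'a::complex_inner) x) = (norm x)^2"
  by (simp add: ci_self)
lemma norm_sC: "norm (scaleC c (x::'a::complex_inner)) = cmod c * norm x"
proof -
  have e: "cinner (scaleC c x) (scaleC c x) = c * cnj c * cinner x x"
    by (simp add: cinner_scaleC_left ci_sC_r mult_ac)
  have "(norm (scaleC c x))^2 = Re (c * cnj c * cinner x x)"
    by (simp only: ci_self_Re[symmetric] e)
  also have "c * cnj c * cinner x x = complex_of_real ((cmod c)^2 * (norm x)^2)"
    by (simp add: ci_self mcnj mcnj')
  also have "Re \<dots> = (cmod c * norm x)^2"
    by (simp add: power_mult_distrib)
  finally show ?thesis by (simp add: power2_eq_iff_nonneg)
qed
lemma norm_add_sq: "(norm (x + y::'a::complex_inner))^2 = (norm x)^2 + (norm y)^2 + 2 * Re (cinner x y)"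
proof -
  have "(norm (x + y))^2 = Re (cinner x x + cinner x y + cinner y x + cinner y y)"
    by (simp add: ci_self_Re[symmetric] cinner_add_left ci_add_r)
  also have "\<dots> = (norm x)^2 + (norm y)^2 + 2 * Re (cinner x y)"
    by (subst cinner_commute[of y x]) (simp add: ci_self_Re)
  finally show ?thesis .
qed
lemma pyth: "cinner x y = 0 \<Longrightarrow> (norm (x + y::'a::complex_inner))^2 = (norm x)^2 + (norm y)^2"
  by (simp add: norm_add_sq)
lemma CS: "cmod (cinner (x::'a::complex_inner) y) \<le> norm x * norm y"
proof (cases "y = 0")
  case True then show ?thesis by (simp add: ci0r)
next
  case False
  define N where "N = (norm y)^2"
  have N: "N > 0" using False by (simp add: N_def)
  define c where "c = cinner x y / complex_of_real N"
  have "0 \<le> Re (cinner (x - scaleC c y) (x - scaleC c y))" by (rule cinner_self_nonneg)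
  also have "cinner (x - scaleC c y) (x - scaleC c y)
     = cinner x x - cnj c * cinner x y - c * cinner y x + c * cnj c * cinner y y"
    by (simp add: ci_diff_l ci_diff_r cinner_scaleC_left ci_sC_r algebra_simps)
  also have "c * cinner y x = complex_of_real ((cmod (cinner x y))^2 / N)"
    by (subst cinner_commute) (simp add: c_def mcnj mcnj')
  also have "cnj c * cinner x y = complex_of_real ((cmod (cinner x y))^2 / N)"
    by (simp add: c_def mcnj mcnj' mult.commute)
  also have "c * cnj c * cinner y y = complex_of_real ((cmod (cinner x y))^2 / N)"
  proof -
    have "complex_of_real (norm y) * complex_of_real (norm y) = complex_of_real N"
      by (simp add: N_def power2_eq_square)
    then show ?thesis using N by (simp add: c_def ci_self mcnj mcnj' power2_eq_square)
  qed
  also have "cinner x x = complex_of_real ((norm x)^2)" by (rule ci_self)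
  finally have "0 \<le> (norm x)^2 - (cmod (cinner x y))^2 / N"
    by (simp del: of_real_power add: of_real_diff[symmetric] of_real_add[symmetric])
  hence "(cmod (cinner x y))^2 \<le> (norm x)^2 * N" using N
    by (simp add: field_simps)
  hence "(cmod (cinner x y))^2 \<le> (norm x * norm y)^2"
    by (simp add: N_def power_mult_distrib)
  thus ?thesis by (simp add: power2_le_iff_abs_le)
qed
definition csubspace :: "'a::complex_inner set \<Rightarrow> bool" where
  "csubspace M \<longleftrightarrow> 0 \<in> M \<and> (\<forall>x\<in>M. \<forall>y\<in>M. x + y \<in> M) \<and> (\<forall>x\<in>M. \<forall>c. scaleC c x \<in> M)"

definition seqclosed :: "'a::complex_inner set \<Rightarrow> bool" where
  "seqclosed M \<longleftrightarrow> (\<forall>X l. (\<forall>n. X n \<in> M) \<longrightarrow> X \<longlonglongrightarrow> l \<longrightarrow> l \<in> M)"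

lemma csub_0: "csubspace M \<Longrightarrow> 0 \<in> M" by (simp add: csubspace_def)
lemma csub_add: "csubspace M \<Longrightarrow> x \<in> M \<Longrightarrow> y \<in> M \<Longrightarrow> x + y \<in> M" by (simp add: csubspace_def)
lemma csub_sC: "csubspace M \<Longrightarrow> x \<in> M \<Longrightarrow> scaleC c x \<in> M" by (simp add: csubspace_def)
lemma csub_minus: "csubspace M \<Longrightarrow> x \<in> M \<Longrightarrow> - x \<in> M"
  by (metis csub_sC sCm1)
lemma csub_diff: "csubspace M \<Longrightarrow> x \<in> M \<Longrightarrow> y \<in> M \<Longrightarrow> x - y \<in> M"
  by (metis csub_add csub_minus diff_conv_add_uminus)
lemma csub_sR: "csubspace M \<Longrightarrow> x \<in> M \<Longrightarrow> scaleR r x \<in> M"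
  by (simp add: csub_sC scaleR_scaleC)

lemma parallelogram: "(norm (a - b::'a::complex_inner))^2 + (norm (a + b))^2 = 2 * (norm a)^2 + 2 * (norm b)^2"
  using norm_add_sq[of a b] norm_add_sq[of a "-b"] by (simp add: ci_minus_r)

lemma projection:
  fixes M :: "'a::chilbert_space set"
  assumes M: "csubspace M" and C: "seqclosed M"
  shows "\<exists>m\<in>M. \<forall>x\<in>M. cinner (y - m) x = 0"
proof -
  define D where "D = {(norm (y - m))^2 | m. m \<in> M}"
  define d2 where "d2 = Inf D"
  have Dne: "D \<noteq> {}" using csub_0[OF M] by (auto simp: D_def)
  have Dbdd: "bdd_below D" by (auto simp: D_def intro!: bdd_belowI[of _ 0])
  have low: "d2 \<le> (norm (y - m))^2" if "m \<in> M" for m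
    unfolding d2_def by (rule cInf_lower) (use that Dbdd in \<open>auto simp: D_def\<close>)
  have "\<forall>n. \<exists>m. m \<in> M \<and> (norm (y - m))^2 < d2 + 1 / real (Suc n)"
  proof
    fix n
    have "Inf D < d2 + 1 / real (Suc n)" by (simp add: d2_def)
    from cInf_lessD[OF Dne this] show "\<exists>m. m \<in> M \<and> (norm (y - m))^2 < d2 + 1 / real (Suc n)"
      by (auto simp: D_def)
  qed
  then obtain X where X: "\<And>n. X n \<in> M" and Xb: "\<And>n. (norm (y - X n))^2 < d2 + 1 / real (Suc n)"
    by metis
  have diffb: "(norm (X k - X n))^2 \<le> 2 / real (Suc n) + 2 / real (Suc k)" for n k
  proof -
    have mid: "(1/2) *\<^sub>R (X n + X k) \<in> M" by (intro csub_sR[OF M] csub_add[OF M] X)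
    have e1: "(y - X n) - (y - X k) = X k - X n" by simp
    have e2: "(y - X n) + (y - X k) = 2 *\<^sub>R (y - (1/2) *\<^sub>R (X n + X k))"
      by (simp add: algebra_simps scaleR_2)
    have "(norm ((y - X n) + (y - X k)))^2 = 4 * (norm (y - (1/2) *\<^sub>R (X n + X k)))^2"
      by (simp only: e2 norm_scaleR power_mult_distrib) simp
    also have "\<dots> \<ge> 4 * d2" using low[OF mid] by simp
    finally have "(norm ((y - X n) + (y - X k)))^2 \<ge> 4 * d2" .
    moreover note parallelogram[of "y - X n" "y - X k", unfolded e1]
    moreover note Xb[of n] Xb[of k]
    ultimately show ?thesis by linarith
  qed
  have "Cauchy X"
  proof (unfold Cauchy_iff, intro allI impI)
    fix e :: real assume e: "e > 0"
    obtain N :: nat where N: "4 / e^2 < real N" using reals_Archimedean2 by blast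
    have "norm (X m - X n) < e" if "m \<ge> N" "n \<ge> N" for m n
    proof -
      have "2 / real (Suc n) \<le> 2 / real (Suc N)" "2 / real (Suc m) \<le> 2 / real (Suc N)"
        using that by (auto intro!: divide_left_mono)
      moreover have "4 / real (Suc N) < e^2"
      proof -
        have "4 / e^2 < real (Suc N)" using N by simp
        thus ?thesis using e by (simp add: field_simps)
      qed
      ultimately have "(norm (X m - X n))^2 < e^2" using diffb[of m n] by linarith
      thus ?thesis using e by (simp add: power_less_imp_less_base)
    qed
    thus "\<exists>M. \<forall>m\<ge>M. \<forall>n\<ge>M. norm (X m - X n) < e" by blast
  qed
  then obtain m where lim: "X \<longlonglongrightarrow> m" using Cauchy_convergent convergent_def by blast
  have mM: "m \<in> M" using C X lim unfolding seqclosed_def by blast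
  have "(norm (y - m))^2 \<le> d2"
  proof (rule LIMSEQ_le)
    show "(\<lambda>n. (norm (y - X n))^2) \<longlonglongrightarrow> (norm (y - m))^2"
      by (intro tendsto_intros lim)
    show "(\<lambda>n. d2 + 1 / real (Suc n)) \<longlonglongrightarrow> d2"
      using LIMSEQ_inverse_real_of_nat_add[of d2] by (simp add: inverse_eq_divide)
    show "\<exists>N. \<forall>n\<ge>N. (norm (y - X n))^2 \<le> d2 + 1 / real (Suc n)"
      using Xb less_imp_le by blast
  qed
  hence min: "(norm (y - m))^2 \<le> (norm (y - m'))^2" if "m' \<in> M" for m'
    using low[OF that] by linarith
  have "cinner (y - m) x = 0" if x: "x \<in> M" for x
  proof -
    define r where "r = y - m"
    define \<rho> where "\<rho> = cinner r x"
    define t :: real where "t = 1 / ((norm x)^2 + 1)"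
    have t: "t > 0" by (simp add: t_def add_nonneg_pos)
    define c where "c = complex_of_real t * \<rho>"
    have "m + scaleC c x \<in> M" by (intro csub_add[OF M] mM csub_sC[OF M] x)
    from min[OF this] have "(norm r)^2 \<le> (norm (r + - scaleC c x))^2"
      by (simp add: r_def algebra_simps)
    also have "\<dots> = (norm r)^2 + (cmod c * norm x)^2 - 2 * Re (cnj c * \<rho>)"
      using norm_add_sq[of r "- scaleC c x"] by (simp add: norm_sC ci_minus_r ci_sC_r \<rho>_def)
    also have "cnj c * \<rho> = complex_of_real (t * (cmod \<rho>)^2)"
      by (simp add: c_def mcnj')
    also have "cmod c = t * cmod \<rho>" using t by (simp add: c_def norm_mult)
    finally have "2 * t * (cmod \<rho>)^2 \<le> t^2 * (cmod \<rho>)^2 * (norm x)^2"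
      by (simp add: power_mult_distrib algebra_simps)
    hence "2 * (cmod \<rho>)^2 \<le> t * (cmod \<rho>)^2 * (norm x)^2" using t
      by (simp add: power2_eq_square mult.assoc mult_le_cancel_left_pos)
    also have "\<dots> = (cmod \<rho>)^2 * ((norm x)^2 / ((norm x)^2 + 1))"
      by (simp add: t_def)
    also have "\<dots> \<le> (cmod \<rho>)^2 * 1"
    proof (intro mult_left_mono)
      have "0 < (norm x)^2 + 1" by (simp add: add_nonneg_pos)
      thus "(norm x)^2 / ((norm x)^2 + 1) \<le> 1" by (simp add: divide_le_eq)
    qed simp
    finally have "(cmod \<rho>)^2 \<le> 0" by simp
    thus ?thesis by (simp add: \<rho>_def r_def)
  qed
  thus ?thesis using mM by blast
qed

lemma al_add: "antilinear_on M f \<Longrightarrow> x \<in> M \<Longrightarrow> y \<in> M \<Longrightarrow> f (x + y) = f x + f y"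
  by (simp add: antilinear_on_def)
lemma al_sC: "antilinear_on M f \<Longrightarrow> x \<in> M \<Longrightarrow> f (scaleC c x) = cnj c * f x"
  by (simp add: antilinear_on_def)
lemma al_0: "antilinear_on M f \<Longrightarrow> csubspace M \<Longrightarrow> f 0 = 0"
  using al_add[of M f 0 0] csub_0[of M] by simp
lemma al_diff: "antilinear_on M f \<Longrightarrow> csubspace M \<Longrightarrow> x \<in> M \<Longrightarrow> y \<in> M \<Longrightarrow> f (x - y) = f x - f y"
  using al_add[of M f "x - y" y] csub_diff[of M x y] by simp

lemma riesz:
  fixes M :: "'a::chilbert_space set"
  assumes M: "csubspace M" and C: "seqclosed M"
    and al: "antilinear_on M f" and bd: "bounded_on M f"
  shows "\<exists>r\<in>M. \<forall>v\<in>M. f v = cinner r v"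
proof (cases "\<forall>v\<in>M. f v = 0")
  case True
  then show ?thesis using csub_0[OF M] ci0l by metis
next
  case False
  then obtain y where yM: "y \<in> M" and fy: "f y \<noteq> 0" by blast
  obtain K where K: "\<And>x. x \<in> M \<Longrightarrow> cmod (f x) \<le> K * norm x" using bd unfolding bounded_on_def by blast
  define N where "N = {v\<in>M. f v = 0}"
  have NM: "N \<subseteq> M" by (auto simp: N_def)
  have Nsub: "csubspace N"
    using M al_0[OF al M] unfolding csubspace_def N_def by (auto simp: al_add[OF al] al_sC[OF al])
  have Ncl: "seqclosed N"
    unfolding seqclosed_def
  proof (intro allI impI)
    fix X l assume X: "\<forall>n. X n \<in> N" and lim: "X \<longlonglongrightarrow> l"
    have lM: "l \<in> M" using C X lim NM unfolding seqclosed_def by blast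
    have "cmod (f l) \<le> K * norm (X n - l)" for n
    proof -
      have "f l = f (l - X n)" using X lM NM al_diff[OF al M lM, of "X n"] by (auto simp: N_def)
      also have "cmod \<dots> \<le> K * norm (l - X n)" using K csub_diff[OF M lM, of "X n"] X NM by auto
      finally show ?thesis by (simp add: norm_minus_commute)
    qed
    moreover have "(\<lambda>n. K * norm (X n - l)) \<longlonglongrightarrow> 0"
      using tendsto_mult_right_zero[OF tendsto_norm_zero[OF LIM_zero[OF lim]], of K] .
    ultimately have "cmod (f l) \<le> 0" by (intro LIMSEQ_le[OF tendsto_const]) auto
    thus "l \<in> N" using lM by (simp add: N_def)
  qed
  obtain p where pN: "p \<in> N" and orth: "\<And>x. x \<in> N \<Longrightarrow> cinner (y - p) x = 0"
    using projection[OF Nsub Ncl, of y] by blast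
  define z where "z = y - p"
  have zM: "z \<in> M" using yM pN NM csub_diff[OF M] by (auto simp: z_def)
  have fz: "f z = f y" using al_diff[OF al M yM, of p] pN NM by (auto simp: z_def N_def)
  have z0: "z \<noteq> 0" using fz fy al_0[OF al M] by auto
  have nz: "cinner z z \<noteq> 0" using z0 cinner_self_eq_zero by blast
  define r where "r = scaleC (f z / cinner z z) z"
  have "f v = cinner r v" if vM: "v \<in> M" for v
  proof -
    define x where "x = scaleC (cnj (f z)) v - scaleC (cnj (f v)) z"
    have xM: "x \<in> M" unfolding x_def by (intro csub_diff[OF M] csub_sC[OF M] vM zM)
    have "f x = f z * f v - f v * f z"
      unfolding x_def using al_diff[OF al M csub_sC[OF M vM] csub_sC[OF M zM]] al_sC[OF al vM] al_sC[OF al zM]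
      by simp
    hence "x \<in> N" using xM by (simp add: N_def)
    hence "cinner z x = 0" using orth by (simp add: z_def)
    hence "f z * cinner z v - f v * cinner z z = 0"
      by (simp add: x_def ci_diff_r ci_sC_r)
    hence "f v = f z * cinner z v / cinner z z" using nz by (simp add: field_simps)
    thus ?thesis by (simp add: r_def cinner_scaleC_left)
  qed
  moreover have "r \<in> M" unfolding r_def by (rule csub_sC[OF M zM])
  ultimately show ?thesis by blast
qed

lemma tends_bound:
  fixes X :: "nat \<Rightarrow> 'a::real_normed_vector" and g :: "nat \<Rightarrow> 'b::real_normed_vector"
  assumes "X \<longlonglongrightarrow> l" "\<And>n. norm (g n - c) \<le> B * norm (X n - l)"
  shows "g \<longlonglongrightarrow> c"
proof -
  have "(\<lambda>n. B * norm (X n - l)) \<longlonglongrightarrow> 0"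
    using tendsto_mult_right_zero[OF tendsto_norm_zero[OF LIM_zero[OF assms(1)]], of B] .
  hence "(\<lambda>n. g n - c) \<longlonglongrightarrow> 0"
    by (rule Lim_null_comparison[rotated]) (use assms(2) in auto)
  thus ?thesis by (simp add: LIM_zero_iff)
qed

lemma antilinear_on_mono: "antilinear_on UNIV f \<Longrightarrow> antilinear_on M f"
  by (simp add: antilinear_on_def)

lemma bnb_exist:
  fixes a :: "'a::chilbert_space \<Rightarrow> 'a \<Rightarrow> complex" and M :: "'a set"
  assumes M: "csubspace M" and C: "seqclosed M"
    and add: "\<And>u u' v. a (u + u') v = a u v + a u' v"
    and sc: "\<And>c u v. a (scaleC c u) v = c * a u v"
    and al: "\<And>u. antilinear_on UNIV (a u)"
    and K: "\<And>u v. cmod (a u v) \<le> K * norm u * norm v"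
    and HL: "\<And>u B. u \<in> M \<Longrightarrow> B \<ge> 0 \<Longrightarrow> (\<forall>v\<in>M. cmod (a u v) \<le> B * norm v) \<Longrightarrow> \<alpha> * norm u \<le> B"
    and HR: "\<And>v B. v \<in> M \<Longrightarrow> B \<ge> 0 \<Longrightarrow> (\<forall>u\<in>M. cmod (a u v) \<le> B * norm u) \<Longrightarrow> \<alpha> * norm v \<le> B"
    and alpha: "\<alpha> > 0"
    and fal: "antilinear_on M f" and fbd: "bounded_on M f"
  shows "\<exists>u\<in>M. \<forall>v\<in>M. a u v = f v"
proof -
  have diff: "a (u - u') v = a u v - a u' v" for u u' v
    using add[of u "scaleC (-1) u'" v] sc[of "-1" u' v] by (simp add: sCm1)
  have a0: "a 0 v = 0" for v using sc[of 0 0 v] by (simp add: sC0l)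
  define R where "R = {r\<in>M. \<exists>u\<in>M. \<forall>v\<in>M. a u v = cinner r v}"
  have Rsub: "csubspace R"
  proof -
    have "0 \<in> R" using csub_0[OF M] by (auto simp: R_def a0 ci0l intro!: bexI[of _ 0])
    moreover have "x + y \<in> R" if xR: "x \<in> R" and yR: "y \<in> R" for x y
    proof -
      obtain u where "u \<in> M" "\<forall>v\<in>M. a u v = cinner x v" "x \<in> M" using xR unfolding R_def by blast
      moreover obtain u' where "u' \<in> M" "\<forall>v\<in>M. a u' v = cinner y v" "y \<in> M" using yR unfolding R_def by blast
      ultimately show ?thesis unfolding R_def
        by (auto simp: add cinner_add_left csub_add[OF M] intro!: bexI[of _ "u + u'"])
    qed
    moreover have "scaleC c x \<in> R" if xR: "x \<in> R" for x c
    proof -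
      obtain u where "u \<in> M" "\<forall>v\<in>M. a u v = cinner x v" "x \<in> M" using xR unfolding R_def by blast
      thus ?thesis unfolding R_def
        by (auto simp: sc cinner_scaleC_left csub_sC[OF M] intro!: bexI[of _ "scaleC c u"])
    qed
    ultimately show ?thesis by (simp add: csubspace_def)
  qed
  have Rcl: "seqclosed R"
    unfolding seqclosed_def
  proof (intro allI impI)
    fix X l assume X: "\<forall>n. X n \<in> R" and lim: "X \<longlonglongrightarrow> l"
    have lM: "l \<in> M" using C X lim unfolding seqclosed_def R_def by blast
    have "\<forall>n. \<exists>u. u \<in> M \<and> (\<forall>v\<in>M. a u v = cinner (X n) v)" using X by (auto simp: R_def)
    then obtain U where UM: "\<And>n. U n \<in> M" and U: "\<And>n v. v \<in> M \<Longrightarrow> a (U n) v = cinner (X n) v"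
      by metis
    have Ud: "\<alpha> * norm (U n - U m) \<le> norm (X n - X m)" for n m
    proof (rule HL)
      show "U n - U m \<in> M" by (rule csub_diff[OF M UM UM])
      show "\<forall>v\<in>M. cmod (a (U n - U m) v) \<le> norm (X n - X m) * norm v"
        by (auto simp: diff U ci_diff_l[symmetric] CS)
    qed simp
    have "Cauchy X" using lim by (rule LIMSEQ_imp_Cauchy)
    have "Cauchy U"
    proof (unfold Cauchy_iff, intro allI impI)
      fix e :: real assume e: "e > 0"
      obtain N where N: "\<And>m n. m \<ge> N \<Longrightarrow> n \<ge> N \<Longrightarrow> norm (X m - X n) < \<alpha> * e"
        using \<open>Cauchy X\<close> alpha e unfolding Cauchy_iff by (meson mult_pos_pos)
      have "norm (U m - U n) < e" if "m \<ge> N" "n \<ge> N" for m n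
        using Ud[of m n] N[OF that] alpha by (smt (verit) mult_less_cancel_left_pos)
      thus "\<exists>M. \<forall>m\<ge>M. \<forall>n\<ge>M. norm (U m - U n) < e" by blast
    qed
    then obtain u where ulim: "U \<longlonglongrightarrow> u" using Cauchy_convergent convergent_def by blast
    have uM: "u \<in> M" using C UM ulim unfolding seqclosed_def by blast
    have "a u v = cinner l v" if vM: "v \<in> M" for v
    proof (rule LIMSEQ_unique)
      show "(\<lambda>n. a (U n) v) \<longlonglongrightarrow> a u v"
      proof (rule tends_bound[OF ulim])
        fix n show "norm (a (U n) v - a u v) \<le> (K * norm v) * norm (U n - u)"
          using K[of "U n - u" v] by (simp add: diff[symmetric] mult_ac)
      qed
      show "(\<lambda>n. a (U n) v) \<longlonglongrightarrow> cinner l v"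
        unfolding U[OF vM]
      proof (rule tends_bound[OF lim])
        fix n show "norm (cinner (X n) v - cinner l v) \<le> norm v * norm (X n - l)"
          using CS[of "X n - l" v] by (simp add: ci_diff_l[symmetric] mult_ac)
      qed
    qed
    thus "l \<in> R" using lM uM by (auto simp: R_def)
  qed
  have RM: "R = M"
  proof
    show "R \<subseteq> M" by (auto simp: R_def)
    show "M \<subseteq> R"
    proof
      fix y assume yM: "y \<in> M"
      obtain p where pR: "p \<in> R" and orth: "\<And>x. x \<in> R \<Longrightarrow> cinner (y - p) x = 0"
        using projection[OF Rsub Rcl, of y] by blast
      have pM: "p \<in> M" using pR by (auto simp: R_def)
      define z where "z = y - p"
      have zM: "z \<in> M" using csub_diff[OF M yM pM] by (simp add: z_def)
      have "\<forall>u\<in>M. cmod (a u z) \<le> 0 * norm u"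
      proof
        fix u assume uM: "u \<in> M"
        have "bounded_on M (a u)" unfolding bounded_on_def
          using K[of u] by (intro exI[of _ "K * norm u"]) auto
        then obtain r where rM: "r \<in> M" and r: "\<forall>v\<in>M. a u v = cinner r v"
          using riesz[OF M C antilinear_on_mono[OF al]] by blast
        have "r \<in> R" using rM uM r by (auto simp: R_def)
        hence "cinner z r = 0" using orth by (simp add: z_def)
        hence "a u z = 0" using r zM by (metis cinner_commute complex_cnj_zero)
        thus "cmod (a u z) \<le> 0 * norm u" by simp
      qed
      from HR[OF zM _ this] alpha have "norm z \<le> 0" by (simp add: mult_le_0_iff)
      hence "y = p" by (simp add: z_def)
      thus "y \<in> R" using pR by simp
    qed
  qed
  obtain r where "r \<in> M" "\<forall>v\<in>M. f v = cinner r v" using riesz[OF M C fal fbd] by blast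
  then have "r \<in> R" using RM by simp
  then obtain u where "u \<in> M" "\<forall>v\<in>M. a u v = cinner r v" unfolding R_def by blast
  thus ?thesis using \<open>\<forall>v\<in>M. f v = cinner r v\<close> by auto
qed

lemma sup_le: "(\<And>x. x \<in> S \<Longrightarrow> x \<le> B) \<Longrightarrow> 0 \<le> B \<Longrightarrow> Sup (insert (0::real) S) \<le> B"
  by (rule cSup_least) auto
lemma le_sup: "bdd_above S \<Longrightarrow> x \<in> S \<Longrightarrow> x \<le> Sup (insert (0::real) S)"
  by (rule cSup_upper) auto
lemma sup_nonneg: "bdd_above S \<Longrightarrow> 0 \<le> Sup (insert (0::real) S)"
  by (rule cSup_upper) auto

lemma combine:
  fixes x y :: "'a::complex_inner"
  assumes o: "cinner x y = 0" and x0: "x \<noteq> 0" and y0: "y \<noteq> 0"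
    and G: "\<And>s t. cmod (cnj s * p + cnj t * q) \<le> C * norm (scaleC s x + scaleC t y)"
  shows "(cmod p / norm x)^2 + (cmod q / norm y)^2 \<le> C^2"
proof -
  define S where "S = (cmod p / norm x)^2 + (cmod q / norm y)^2"
  have S0: "S \<ge> 0" by (simp add: S_def)
  define s where "s = p / complex_of_real ((norm x)^2)"
  define t where "t = q / complex_of_real ((norm y)^2)"
  have nx: "norm x > 0" "norm y > 0" using x0 y0 by auto
  have "cnj s * p + cnj t * q = complex_of_real S"
    using nx by (simp add: s_def t_def S_def mcnj' power_divide field_simps mult.assoc[symmetric] mcnj)
  hence lhs: "cmod (cnj s * p + cnj t * q) = S" using S0 by simp
  have "cinner (scaleC s x) (scaleC t y) = 0" by (simp add: cinner_scaleC_left ci_sC_r o)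
  hence "(norm (scaleC s x + scaleC t y))^2 = (cmod s * norm x)^2 + (cmod t * norm y)^2"
    by (simp add: pyth norm_sC)
  also have "cmod s * norm x = cmod p / norm x" using nx by (simp add: s_def norm_divide norm_mult power2_eq_square)
  also have "cmod t * norm y = cmod q / norm y" using nx by (simp add: t_def norm_divide norm_mult power2_eq_square)
  also have "(cmod p / norm x)^2 + (cmod q / norm y)^2 = S" by (simp add: S_def)
  finally have "norm (scaleC s x + scaleC t y) = sqrt S" by (simp add: real_sqrt_unique)
  with G[of s t] lhs have le: "S \<le> C * sqrt S" by simp
  show ?thesis
  proof (cases "S = 0")
    case True thus ?thesis by (simp add: S_def[symmetric])
  next
    case False
    hence "sqrt S > 0" using S0 by simp
    moreover have "sqrt S * sqrt S \<le> C * sqrt S" using le S0 by simp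
    ultimately have "sqrt S \<le> C" by (simp only: mult_le_cancel_right_pos)
    hence "(sqrt S)^2 \<le> C^2" using S0 by (intro power_mono) auto
    thus ?thesis using S0 by (simp add: S_def)
  qed
qed

lemma div_le: "(x::real) \<le> Bd * d \<Longrightarrow> 0 \<le> Bd \<Longrightarrow> 0 \<le> d \<Longrightarrow> x / d \<le> Bd"
  by (cases "d = 0") (auto simp: pos_divide_le_eq)

theorem lemma1:
  fixes A :: "'v::chilbert_space \<Rightarrow> 'v \<Rightarrow> complex"
    and B :: "'v \<Rightarrow> 'q::chilbert_space \<Rightarrow> complex"
    and V0 V1 :: "'v set"
  assumes A_bdd: "bounded_op_to_dual A"
    and B_bdd: "bounded_op_to_dual B"
    and a_finite: "bdd_above (form_quotients A)"
    and alpha_eq: "inf_sup_left A (ker_op B) = inf_sup_right A (ker_op B)"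
    and alpha_pos: "inf_sup_left A (ker_op B) > 0"
    and ker_nontriv: "ker_op B \<noteq> {0}"
    and V0_def: "V0 = ker_op B"
    and V1_def: "V1 = orth_compl V0"
  shows "opnorm_dual_dual V0 V1 (\<lambda>f v. A (A00_inv A V0 f) v)
           \<le> sqrt ((form_norm A)\<^sup>2 / (inf_sup_left A V0)\<^sup>2 - 1)
     \<and> opnorm_sp_sp V1 (\<lambda>u. A00_inv A V0 (\<lambda>v. A u v))
           \<le> sqrt ((form_norm A)\<^sup>2 / (inf_sup_left A V0)\<^sup>2 - 1)
     \<and> opnorm_sp_dual V1 V1 (\<lambda>u v. A u v - A (A00_inv A V0 (\<lambda>w. A u w)) v)
           \<le> (form_norm A)\<^sup>2 / inf_sup_left A V0"
proof -
  obtain KA where addA: "\<And>u u' v. A (u + u') v = A u v + A u' v"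
    and scA: "\<And>c u v. A (scaleC c u) v = c * A u v"
    and alA: "\<And>u. antilinear_on UNIV (A u)"
    and KA: "\<And>u v. cmod (A u v) \<le> KA * norm u * norm v"
    using A_bdd unfolding bounded_op_to_dual_def by blast
  obtain KB where addB: "\<And>u u' v. B (u + u') v = B u v + B u' v"
    and scB: "\<And>c u v. B (scaleC c u) v = c * B u v"
    and KB: "\<And>u v. cmod (B u v) \<le> KB * norm u * norm v"
    using B_bdd unfolding bounded_op_to_dual_def by blast
  have A0l: "A 0 v = 0" for v using scA[of 0 0 v] by (simp add: sC0l)
  have A0r: "A u 0 = 0" for u using al_add[OF alA[of u], of 0 0] by simp
  have Adiff: "A (u - u') v = A u v - A u' v" for u u' v
    using addA[of u "scaleC (-1) u'" v] scA[of "-1" u' v] by (simp add: sCm1)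
  have Bdiff: "B (u - u') v = B u v - B u' v" for u u' v
    using addB[of u "scaleC (-1) u'" v] scB[of "-1" u' v] by (simp add: sCm1)
  have Aal: "A u (scaleC s x + scaleC t y) = cnj s * A u x + cnj t * A u y" for u s t x y
    using al_add[OF alA[of u]] al_sC[OF alA[of u]] by simp
  have V0sub: "csubspace V0"
    unfolding V0_def ker_op_def csubspace_def
    using scB[of 0 0] by (auto simp: addB scB sC0l)
  have V0cl: "seqclosed V0"
    unfolding seqclosed_def
  proof (intro allI impI)
    fix X l assume X: "\<forall>n. X n \<in> V0" and lim: "X \<longlonglongrightarrow> l"
    have "B l q = 0" for q
    proof (rule LIMSEQ_unique)
      show "(\<lambda>n. B (X n) q) \<longlonglongrightarrow> B l q"
      proof (rule tends_bound[OF lim])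
        fix n show "norm (B (X n) q - B l q) \<le> (KB * norm q) * norm (X n - l)"
          using KB[of "X n - l" q] by (simp add: Bdiff[symmetric] mult_ac)
      qed
      show "(\<lambda>n. B (X n) q) \<longlonglongrightarrow> 0" using X by (simp add: V0_def ker_op_def)
    qed
    thus "l \<in> V0" by (simp add: V0_def ker_op_def)
  qed
  have orth: "cinner v1 v0 = 0" if "v1 \<in> V1" "v0 \<in> V0" for v1 v0
    using that by (simp add: V1_def orth_compl_def)
  define na where "na = form_norm A"
  have na0: "na \<ge> 0" unfolding na_def form_norm_def by (rule sup_nonneg[OF a_finite])
  have F1: "cmod (A u v) \<le> na * norm u * norm v" for u v
  proof (cases "u = 0 \<or> v = 0")
    case True thus ?thesis by (auto simp: A0l A0r)
  next
    case False
    hence "cmod (A u v) / (norm u * norm v) \<in> form_quotients A" by (auto simp: form_quotients_def)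
    hence "cmod (A u v) / (norm u * norm v) \<le> na"
      unfolding na_def form_norm_def by (rule le_sup[OF a_finite])
    thus ?thesis using False by (simp add: pos_divide_le_eq mult.assoc)
  qed
  define \<alpha> where "\<alpha> = inf_sup_left A V0"
  have apos: "\<alpha> > 0" using alpha_pos by (simp add: \<alpha>_def V0_def)
  have aR: "inf_sup_right A V0 = \<alpha>" using alpha_eq by (simp add: \<alpha>_def V0_def)
  have HL: "\<alpha> * norm u \<le> Bd" if uV: "u \<in> V0" and Bd: "Bd \<ge> 0" and hb: "\<forall>v\<in>V0. cmod (A u v) \<le> Bd * norm v" for u Bd
  proof (cases "u = 0")
    case True thus ?thesis using Bd by simp
  next
    case False
    have bdd: "bdd_above {cmod (A u' v) / (norm u' * norm v) | v. v \<in> V0 \<and> v \<noteq> 0}" for u'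
      by (rule bdd_aboveI[of _ na]) (auto intro!: div_le simp: na0 F1[unfolded mult.assoc])
    have "\<alpha> \<le> Sup (insert 0 {cmod (A u v) / (norm u * norm v) | v. v \<in> V0 \<and> v \<noteq> 0})"
      unfolding \<alpha>_def inf_sup_left_def
    proof (rule cInf_lower)
      show "Sup (insert 0 {cmod (A u v) / (norm u * norm v) | v. v \<in> V0 \<and> v \<noteq> 0})
        \<in> {Sup (insert 0 {cmod (A u v) / (norm u * norm v) | v. v \<in> V0 \<and> v \<noteq> 0}) | u. u \<in> V0 \<and> u \<noteq> 0}"
        using uV False by blast
      show "bdd_below {Sup (insert 0 {cmod (A u v) / (norm u * norm v) | v. v \<in> V0 \<and> v \<noteq> 0}) | u. u \<in> V0 \<and> u \<noteq> 0}"
        by (rule bdd_belowI[of _ 0]) (auto intro: sup_nonneg[OF bdd])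
    qed
    also have "\<dots> \<le> Bd / norm u"
    proof (rule sup_le)
      fix x assume "x \<in> {cmod (A u v) / (norm u * norm v) | v. v \<in> V0 \<and> v \<noteq> 0}"
      then obtain v where v: "v \<in> V0" "v \<noteq> 0" "x = cmod (A u v) / (norm u * norm v)" by blast
      have "cmod (A u v) \<le> Bd / norm u * (norm u * norm v)" using hb v False by simp
      thus "x \<le> Bd / norm u" using v Bd by (auto intro!: div_le)
    qed (use Bd in simp)
    finally show ?thesis using False by (simp add: le_divide_eq mult.commute)
  qed
  have HR: "\<alpha> * norm v \<le> Bd" if vV: "v \<in> V0" and Bd: "Bd \<ge> 0" and hb: "\<forall>u\<in>V0. cmod (A u v) \<le> Bd * norm u" for v Bd
  proof (cases "v = 0")
    case True thus ?thesis using Bd by simp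
  next
    case False
    have bdd: "bdd_above {cmod (A u v') / (norm u * norm v') | u. u \<in> V0 \<and> u \<noteq> 0}" for v'
      by (rule bdd_aboveI[of _ na]) (auto intro!: div_le simp: na0 F1[unfolded mult.assoc])
    have "\<alpha> \<le> Sup (insert 0 {cmod (A u v) / (norm u * norm v) | u. u \<in> V0 \<and> u \<noteq> 0})"
      unfolding aR[symmetric] inf_sup_right_def
    proof (rule cInf_lower)
      show "Sup (insert 0 {cmod (A u v) / (norm u * norm v) | u. u \<in> V0 \<and> u \<noteq> 0})
        \<in> {Sup (insert 0 {cmod (A u v) / (norm u * norm v) | u. u \<in> V0 \<and> u \<noteq> 0}) | v. v \<in> V0 \<and> v \<noteq> 0}"
        using vV False by blast
      show "bdd_below {Sup (insert 0 {cmod (A u v) / (norm u * norm v) | u. u \<in> V0 \<and> u \<noteq> 0}) | v. v \<in> V0 \<and> v \<noteq> 0}"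
        by (rule bdd_belowI[of _ 0]) (auto intro: sup_nonneg[OF bdd])
    qed
    also have "\<dots> \<le> Bd / norm v"
    proof (rule sup_le)
      fix x assume "x \<in> {cmod (A u v) / (norm u * norm v) | u. u \<in> V0 \<and> u \<noteq> 0}"
      then obtain u where u: "u \<in> V0" "u \<noteq> 0" "x = cmod (A u v) / (norm u * norm v)" by blast
      have "cmod (A u v) \<le> Bd / norm v * (norm u * norm v)" using hb u False by simp
      thus "x \<le> Bd / norm v" using u Bd by (auto intro!: div_le)
    qed (use Bd in simp)
    finally show ?thesis using False by (simp add: le_divide_eq mult.commute)
  qed
  have inv: "A00_inv A V0 f \<in> V0 \<and> (\<forall>v\<in>V0. A (A00_inv A V0 f) v = f v)"
    if fal: "antilinear_on V0 f" and fbd: "bounded_on V0 f" for f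
  proof -
    obtain u where uV: "u \<in> V0" and u: "\<forall>v\<in>V0. A u v = f v"
      using bnb_exist[OF V0sub V0cl addA scA alA KA HL HR apos fal fbd] by blast
    have "A00_inv A V0 f = u" unfolding A00_inv_def
    proof (rule the_equality)
      show "u \<in> V0 \<and> (\<forall>v\<in>V0. A u v = f v)" using uV u by blast
      fix u' assume u': "u' \<in> V0 \<and> (\<forall>v\<in>V0. A u' v = f v)"
      have "\<alpha> * norm (u' - u) \<le> 0"
        by (rule HL) (use u' u uV csub_diff[OF V0sub] in \<open>auto simp: Adiff\<close>)
      thus "u' = u" using apos by (simp add: mult_le_0_iff)
    qed
    thus ?thesis using uV u by simp
  qed
  obtain u1 where u1: "u1 \<in> V0" "u1 \<noteq> 0" using ker_nontriv csub_0[OF V0sub] V0_def by blast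
  have "\<alpha> * norm u1 \<le> na * norm u1" by (rule HL) (use u1 na0 F1 in auto)
  hence ana: "\<alpha> \<le> na" using u1 by simp
  define K where "K = na^2 / \<alpha>^2"
  have K1: "K \<ge> 1" using ana apos by (simp add: K_def power_mono)
  have Ksq: "(na / \<alpha>)^2 = K" by (simp add: K_def power_divide)
  have c1: "opnorm_dual_dual V0 V1 (\<lambda>f v. A (A00_inv A V0 f) v) \<le> sqrt (K - 1)"
    unfolding opnorm_dual_dual_def
  proof (rule sup_le)
    fix r assume "r \<in> {dual_norm V1 (A (A00_inv A V0 f)) / dual_norm V0 f | f. f \<in> dual_space V0 \<and> dual_norm V0 f \<noteq> 0}"
    then obtain f where fd: "f \<in> dual_space V0" and Dn: "dual_norm V0 f \<noteq> 0"
      and r: "r = dual_norm V1 (A (A00_inv A V0 f)) / dual_norm V0 f" by blast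
    have fal: "antilinear_on V0 f" and fbd: "bounded_on V0 f" using fd by (auto simp: dual_space_def)
    obtain Kf where Kf: "\<And>x. x \<in> V0 \<Longrightarrow> cmod (f x) \<le> Kf * norm x" using fbd unfolding bounded_on_def by blast
    define u0 where "u0 = A00_inv A V0 f"
    have u0V: "u0 \<in> V0" and u0: "\<And>v. v \<in> V0 \<Longrightarrow> A u0 v = f v" using inv[OF fal fbd] by (auto simp: u0_def)
    define D where "D = dual_norm V0 f"
    have bddf: "bdd_above {cmod (f v) / norm v | v. v \<in> V0 \<and> v \<noteq> 0}"
      by (rule bdd_aboveI[of _ Kf]) (auto simp: Kf pos_divide_le_eq)
    have D0: "D \<ge> 0" unfolding D_def dual_norm_def by (rule sup_nonneg[OF bddf])
    have Dpos: "D > 0" using D0 Dn by (simp add: D_def)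
    have fle: "cmod (f v) \<le> D * norm v" if "v \<in> V0" for v
    proof (cases "v = 0")
      case True thus ?thesis using al_0[OF fal V0sub] by simp
    next
      case False
      have "cmod (f v) / norm v \<le> D" unfolding D_def dual_norm_def
        by (rule le_sup[OF bddf]) (use that False in blast)
      thus ?thesis using False by (simp add: pos_divide_le_eq)
    qed
    have au0: "\<alpha> * norm u0 \<le> D" by (rule HL[OF u0V D0]) (use fle u0 in simp)
    have "na * norm u0 \<le> na * (D / \<alpha>)"
      using au0 apos na0 by (intro mult_left_mono) (simp_all add: le_divide_eq mult.commute)
    hence "(na * norm u0)^2 \<le> (na * (D / \<alpha>))^2" using na0 by (intro power_mono) auto
    also have "\<dots> = K * D^2" by (simp add: K_def power_mult_distrib power_divide)
    finally have nu: "(na * norm u0)^2 \<le> K * D^2" .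
    have P: "cmod (A u0 v1) / norm v1 \<le> sqrt (K - 1) * D" if v1: "v1 \<in> V1" "v1 \<noteq> 0" for v1
    proof -
      define P where "P = cmod (A u0 v1) / norm v1"
      have P0: "P \<ge> 0" by (simp add: P_def)
      have "P \<le> na * norm u0" unfolding P_def using F1[of u0 v1] v1
        by (simp add: pos_divide_le_eq)
      hence Rt: "P^2 \<le> (na * norm u0)^2" using P0 by (intro power_mono) auto
      have "D \<le> sqrt ((na * norm u0)^2 - P^2)" unfolding D_def dual_norm_def
      proof (rule sup_le)
        fix x assume "x \<in> {cmod (f v) / norm v | v. v \<in> V0 \<and> v \<noteq> 0}"
        then obtain v0 where v0: "v0 \<in> V0" "v0 \<noteq> 0" "x = cmod (f v0) / norm v0" by blast
        have "(cmod (A u0 v1) / norm v1)^2 + (cmod (A u0 v0) / norm v0)^2 \<le> (na * norm u0)^2"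
        proof (rule combine)
          show "cinner v1 v0 = 0" by (rule orth[OF v1(1) v0(1)])
          fix s t
          show "cmod (cnj s * A u0 v1 + cnj t * A u0 v0) \<le> na * norm u0 * norm (scaleC s v1 + scaleC t v0)"
            using F1[of u0 "scaleC s v1 + scaleC t v0"] by (simp add: Aal)
        qed (use v1 v0 in auto)
        hence "x^2 \<le> (na * norm u0)^2 - P^2" using v0 u0 by (simp add: P_def)
        thus "x \<le> sqrt ((na * norm u0)^2 - P^2)" by (rule real_le_rsqrt)
      qed (use Rt in simp)
      hence "D^2 \<le> (na * norm u0)^2 - P^2" using D0 Rt
        by (metis diff_ge_0_iff_ge power_mono real_sqrt_pow2)
      moreover have "(sqrt (K - 1) * D)^2 = K * D^2 - D^2" using K1
        by (simp add: power_mult_distrib algebra_simps)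
      ultimately have "P^2 \<le> (sqrt (K - 1) * D)^2" using nu by linarith
      hence "P \<le> sqrt (K - 1) * D"
        by (rule power2_le_imp_le) (use K1 D0 in simp)
      thus ?thesis by (simp only: P_def)
    qed
    have "dual_norm V1 (A u0) \<le> sqrt (K - 1) * D" unfolding dual_norm_def
    proof (rule sup_le)
      fix x assume "x \<in> {cmod (A u0 v) / norm v | v. v \<in> V1 \<and> v \<noteq> 0}"
      thus "x \<le> sqrt (K - 1) * D" using P by blast
    qed (use K1 D0 in simp)
    thus "r \<le> sqrt (K - 1)" using Dpos by (simp add: r u0_def D_def pos_divide_le_eq)
  qed (use K1 in simp)
  have key: "norm w \<le> sqrt (K - 1) * norm u \<and> (\<forall>v\<in>V1. cmod (A u v - A w v) \<le> na^2 / \<alpha> * norm u * norm v)"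
    if uV: "u \<in> V1" and u0: "u \<noteq> 0" and wd: "w = A00_inv A V0 (\<lambda>v. A u v)" for u w
  proof -
    have gbd: "bounded_on V0 (A u)" unfolding bounded_on_def
      using F1[of u] by (intro exI[of _ "na * norm u"]) auto
    have wV: "w \<in> V0" and weq: "\<And>v. v \<in> V0 \<Longrightarrow> A w v = A u v"
      using inv[OF antilinear_on_mono[OF alA] gbd] wd by auto
    have nn: "na^2 - \<alpha>^2 \<ge> 0" using ana apos by (simp add: power_mono)
    have key1: "cmod (A u v0) \<le> sqrt (na^2 - \<alpha>^2) * norm u * norm v0" if v0V: "v0 \<in> V0" for v0
    proof (cases "v0 = 0")
      case True thus ?thesis by (simp add: A0r)
    next
      case False
      define Q where "Q = cmod (A u v0) / norm u"
      have Q0: "Q \<ge> 0" by (simp add: Q_def)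
      have "Q \<le> na * norm v0" unfolding Q_def using F1[of u v0] u0
        by (simp add: pos_divide_le_eq mult_ac)
      hence Rt: "Q^2 \<le> (na * norm v0)^2" using Q0 by (intro power_mono) auto
      have "\<alpha> * norm v0 \<le> sqrt ((na * norm v0)^2 - Q^2)"
      proof (rule HR[OF v0V])
        show "\<forall>x0\<in>V0. cmod (A x0 v0) \<le> sqrt ((na * norm v0)^2 - Q^2) * norm x0"
        proof
          fix x0 assume x0V: "x0 \<in> V0"
          show "cmod (A x0 v0) \<le> sqrt ((na * norm v0)^2 - Q^2) * norm x0"
          proof (cases "x0 = 0")
            case True thus ?thesis by (simp add: A0l)
          next
            case x0: False
            have "(cmod (cnj (A u v0)) / norm u)^2 + (cmod (cnj (A x0 v0)) / norm x0)^2 \<le> (na * norm v0)^2"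
            proof (rule combine)
              show "cinner u x0 = 0" by (rule orth[OF uV x0V])
              fix s t
              have "cnj s * cnj (A u v0) + cnj t * cnj (A x0 v0) = cnj (A (scaleC s u + scaleC t x0) v0)"
                by (simp add: addA scA)
              moreover have "cmod (A (scaleC s u + scaleC t x0) v0) \<le> na * norm v0 * norm (scaleC s u + scaleC t x0)"
                using F1[of "scaleC s u + scaleC t x0" v0] by (simp add: mult_ac)
              ultimately show "cmod (cnj s * cnj (A u v0) + cnj t * cnj (A x0 v0)) \<le> na * norm v0 * norm (scaleC s u + scaleC t x0)"
                by simp
            qed (use u0 x0 in auto)
            hence "(cmod (A x0 v0) / norm x0)^2 \<le> (na * norm v0)^2 - Q^2" by (simp add: Q_def)
            hence "cmod (A x0 v0) / norm x0 \<le> sqrt ((na * norm v0)^2 - Q^2)" by (rule real_le_rsqrt)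
            thus ?thesis using x0 by (simp add: pos_divide_le_eq)
          qed
        qed
      qed (use Rt in simp)
      hence "(\<alpha> * norm v0)^2 \<le> (na * norm v0)^2 - Q^2" using apos Rt
        by (metis diff_ge_0_iff_ge mult_nonneg_nonneg norm_ge_zero less_imp_le power_mono real_sqrt_pow2)
      hence "Q^2 \<le> (na^2 - \<alpha>^2) * (norm v0)^2" by (simp add: power_mult_distrib algebra_simps)
      hence "(cmod (A u v0))^2 \<le> (sqrt (na^2 - \<alpha>^2) * norm u * norm v0)^2"
        using u0 nn by (simp add: Q_def power_divide power_mult_distrib field_simps)
      thus ?thesis by (rule power2_le_imp_le) (use nn in simp)
    qed
    have "\<alpha> * norm w \<le> sqrt (na^2 - \<alpha>^2) * norm u"
      by (rule HL[OF wV]) (use nn key1 weq in \<open>auto simp: mult_ac\<close>)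
    hence "(\<alpha> * norm w)^2 \<le> (sqrt (na^2 - \<alpha>^2) * norm u)^2"
      by (rule power_mono) (use apos in simp)
    hence "\<alpha>^2 * (norm w)^2 \<le> (na^2 - \<alpha>^2) * (norm u)^2" using nn by (simp add: power_mult_distrib)
    hence w2: "(norm w)^2 \<le> (K - 1) * (norm u)^2" using apos
      by (simp add: K_def field_simps)
    have c2: "norm w \<le> sqrt (K - 1) * norm u"
      by (rule power2_le_imp_le) (use w2 K1 in \<open>simp_all add: power_mult_distrib\<close>)
    have "cinner u (- w) = 0" using orth[OF uV wV] by (simp add: ci_minus_r)
    hence "(norm (u - w))^2 = (norm u)^2 + (norm w)^2" using pyth[of u "-w"] by simp
    also have "\<dots> \<le> ((na / \<alpha>) * norm u)^2"
    proof -
      have "((na / \<alpha>) * norm u)^2 = K * (norm u)^2" by (simp only: power_mult_distrib Ksq)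
      thus ?thesis using w2 by (simp add: algebra_simps)
    qed
    finally have "norm (u - w) \<le> (na / \<alpha>) * norm u"
      by (rule power2_le_imp_le) (use apos na0 in simp)
    hence c3: "cmod (A u v - A w v) \<le> na^2 / \<alpha> * norm u * norm v" for v
    proof -
      assume h: "norm (u - w) \<le> (na / \<alpha>) * norm u"
      have "cmod (A u v - A w v) \<le> na * norm (u - w) * norm v" using F1[of "u - w" v] by (simp add: Adiff)
      also have "\<dots> \<le> na * ((na / \<alpha>) * norm u) * norm v"
        using h na0 by (intro mult_right_mono mult_left_mono) auto
      also have "\<dots> = na^2 / \<alpha> * norm u * norm v" by (simp add: power2_eq_square)
      finally show ?thesis .
    qed
    show ?thesis using c2 c3 by blast
  qed
  have c2: "opnorm_sp_sp V1 (\<lambda>u. A00_inv A V0 (\<lambda>v. A u v)) \<le> sqrt (K - 1)"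
    unfolding opnorm_sp_sp_def
  proof (rule sup_le)
    fix r assume "r \<in> {norm (A00_inv A V0 (A u)) / norm u | u. u \<in> V1 \<and> u \<noteq> 0}"
    then obtain u where u: "u \<in> V1" "u \<noteq> 0" and r: "r = norm (A00_inv A V0 (A u)) / norm u" by blast
    have "norm (A00_inv A V0 (A u)) \<le> sqrt (K - 1) * norm u" using key[OF u] by simp
    thus "r \<le> sqrt (K - 1)" using u by (simp add: r pos_divide_le_eq)
  qed (use K1 in simp)
  have c3: "opnorm_sp_dual V1 V1 (\<lambda>u v. A u v - A (A00_inv A V0 (\<lambda>w. A u w)) v) \<le> na^2 / \<alpha>"
    unfolding opnorm_sp_dual_def
  proof (rule sup_le)
    fix r assume "r \<in> {dual_norm V1 (\<lambda>v. A u v - A (A00_inv A V0 (A u)) v) / norm u | u. u \<in> V1 \<and> u \<noteq> 0}"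
    then obtain u where u: "u \<in> V1" "u \<noteq> 0" and r: "r = dual_norm V1 (\<lambda>v. A u v - A (A00_inv A V0 (A u)) v) / norm u" by blast
    have h: "cmod (A u v - A (A00_inv A V0 (A u)) v) \<le> na^2 / \<alpha> * norm u * norm v" if "v \<in> V1" for v
      using key[OF u refl] that by simp
    have "dual_norm V1 (\<lambda>v. A u v - A (A00_inv A V0 (A u)) v) \<le> na^2 / \<alpha> * norm u"
      unfolding dual_norm_def
    proof (rule sup_le)
      fix x assume "x \<in> {cmod (A u v - A (A00_inv A V0 (A u)) v) / norm v | v. v \<in> V1 \<and> v \<noteq> 0}"
      then obtain v where v: "v \<in> V1" "v \<noteq> 0" "x = cmod (A u v - A (A00_inv A V0 (A u)) v) / norm v" by blast
      show "x \<le> na^2 / \<alpha> * norm u" using h[OF v(1)] v by (simp add: pos_divide_le_eq)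
    qed (use apos in simp)
    thus "r \<le> na^2 / \<alpha>" using u by (simp add: r pos_divide_le_eq)
  qed (use apos in simp)
  have c23: "opnorm_sp_sp V1 (\<lambda>u. A00_inv A V0 (\<lambda>v. A u v)) \<le> sqrt (K - 1)
     \<and> opnorm_sp_dual V1 V1 (\<lambda>u v. A u v - A (A00_inv A V0 (\<lambda>w. A u w)) v) \<le> na^2 / \<alpha>"
    using c2 c3 by blast
  show ?thesis using c1 c23 unfolding K_def na_def \<alpha>_def by simp
qed
end
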